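(* Assume (A1) and (H1), let $\lambda>1$, let $(X,\nu,\eta)$ be the solution of the fluid equations with arrival rate $\lambda$ and initial condition $(X(0),\nu_0,\eta_0)\in\bar{\mathcal S}_0$, and let $\theta_t$ be as in the context. Then $\sup_{t\ge0}\langle h^s,\theta_t\rangle\le c_h$, $\int_0^\infty\langle h^s,\theta_t\rangle\,dt<\infty$, and $\int_0^\infty\big|\langle h^s,\theta_t\rangle\log\langle h^s,\theta_t\rangle\big|\,dt<\infty$ (with $0\log0=0$).
   Context: Standing assumption (A1): $G^s,G^r$ are cumulative distribution functions on $[0,\infty)$ with $G^s(0+)=G^r(0+)=0$, absolutely continuous with densities $g^s,g^r$. Write $\bar G^s=1-G^s$, $\bar G^r=1-G^r$, $H^s=\sup\{x\ge0:G^s(x)<1\}$, $H^r=\sup\{x\ge0:G^r(x)<1\}$, and hazard rates $h^s=g^s/\bar G^s$ on $[0,H^s)$, $h^r=g^r/\bar G^r$ on $[0,H^r)$. It is assumed that $\int_0^\infty\bar G^r(x)\,dx<\infty$, $\int_0^\infty\bar G^s(x)\,dx=\int_0^\infty xg^s(x)\,dx=1$, and that there exist $\bar H^s<H^s$ and $\bar H^r<H^r$ such that $h^s$ (resp. $h^r$) is a.e. equal to a function that is bounded or lower semicontinuous on $(\bar H^s,H^s)$ (resp. $(\bar H^r,H^r)$). Notation: $\mathcal M_F[0,H)$ is the set of finite nonnegative Borel measures on $[0,H)$; $\langle\psi,\mu\rangle=\int\psi\,d\mu$; $\mathbf 1$ is the constant function $1$; for $\mu\in\mathcal M_F[0,H)$,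 $F^\mu(x)=\mu[0,x]$ and $(F^\mu)^{-1}(y)=\inf\{x>0:F^\mu(x)\ge y\}$. State space: $\bar{\mathcal S}_0=\{(x,\nu,\eta)\in\mathbb R_+\times\mathcal M_F[0,H^s)\times\mathcal M_F[0,H^r):1-\langle\mathbf 1,\nu\rangle=[1-x]^+\}$. Fluid equations: Given $\lambda\ge0$ and $(X(0),\nu_0,\eta_0)\in\bar{\mathcal S}_0$, a càdlàg function $t\mapsto(X(t),\nu_t,\eta_t)$ is a solution of the fluid equations with arrival rate $\lambda$ and this initial condition if for all $t\ge0$: $S(t):=\int_0^t\langle h^r,\eta_s\rangle ds<\infty$ and $D(t):=\int_0^t\langle h^s,\nu_s\rangle ds<\infty$; for every $\varphi\in C^1_c([0,H^s)\times\mathbb R_+)$, $\langle\varphi(\cdot,t),\nu_t\rangle=\langle\varphi(\cdot,0),\nu_0\rangle+\int_0^t\langle\varphi_s(\cdot,s)+\varphi_x(\cdot,s),\nu_s\rangle ds-\int_0^t\langle h^s\varphi(\cdot,s),\nu_s\rangle ds+\int_0^t\varphi(0,s)\,dK(s)$, where $K(t)=\langle\mathbf 1,\nu_t\rangle-\langle\mathbf 1,\nu_0\rangle+D(t)$; for every $\varphi\in C^1_c([0,H^r)\times\mathbb R_+)$, $\langle\varphi(\cdot,t),\eta_t\rangle=\langle\varphi(\cdot,0),\eta_0\rangle+\int_0^t\langle\varphi_s(\cdot,s)+\varphi_x(\cdot,s),\eta_s\rangle ds-\int_0^t\langle h^r\varphi(\cdot,s),\eta_s\rangle ds+\lambda\int_0^t\varphi(0,s)\,ds$;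 $1-\langle\mathbf 1,\nu_t\rangle=[1-X(t)]^+$; $X(t)=X(0)+\lambda t-D(t)-R(t)$ with $R(t)=\int_0^t\int_0^{Q(s)}h^r((F^{\eta_s})^{-1}(y))\,dy\,ds$ and $Q(t)=X(t)-\langle\mathbf 1,\nu_t\rangle$; and $Q(t)\le\langle\mathbf 1,\eta_t\rangle$. (H1): $\varepsilon_h:=\operatorname{ess\,inf}_{x\ge0}h^s(x)>0$ and $c_h:=\operatorname{ess\,sup}_{x\ge0}h^s(x)<\infty$ (so $H^s=\infty$). $\theta_t\in\mathcal M_F[0,\infty)$ is defined by $\langle\psi,\theta_t\rangle=\int_{[0,\infty)}\frac{\bar G^s(x+t)}{\bar G^s(x)}\psi(x+t)\,\nu_0(dx)$ for bounded measurable $\psi$ and for $\psi=h^s$. *)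

theory Defs
  imports "HOL-Probability.Probability"
begin

text \<open>A distribution on [0,oo) is given through its density g (which vanishes off [0,oo)
 for all purposes: the distribution function integrates g from 0).\<close>

definition cdf_d :: "(real \<Rightarrow> real) \<Rightarrow> real \<Rightarrow> real" where
  "cdf_d g x = (\<integral>y\<in>{0..x}. g y \<partial>lborel)"

definition ccdf_d :: "(real \<Rightarrow> real) \<Rightarrow> real \<Rightarrow> real" where
  "ccdf_d g x = 1 - cdf_d g x"

definition Hend :: "(real \<Rightarrow> real) \<Rightarrow> ereal" where
  "Hend g = Sup {ereal x | x. 0 \<le> x \<and> cdf_d g x < 1}"

text \<open>hazard rate h = g / (1 - G) (only meaningful on [0,H))\<close>
definition hazard :: "(real \<Rightarrow> real) \<Rightarrow> real \<Rightarrow> real" where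
  "hazard g x = g x / ccdf_d g x"

definition is_density :: "(real \<Rightarrow> real) \<Rightarrow> bool" where
  "is_density g \<longleftrightarrow> g \<in> borel_measurable borel \<and> (\<forall>x. 0 \<le> g x)
     \<and> (\<integral>\<^sup>+x\<in>{0..}. ennreal (g x) \<partial>lborel) = 1"

definition lsc_on :: "real set \<Rightarrow> (real \<Rightarrow> real) \<Rightarrow> bool" where
  "lsc_on U f \<longleftrightarrow> (\<forall>x\<in>U. \<forall>c<f x. \<exists>e>0. \<forall>y\<in>U. \<bar>y - x\<bar> < e \<longrightarrow> c < f y)"

definition hazard_regular :: "(real \<Rightarrow> real) \<Rightarrow> bool" where
  "hazard_regular g \<longleftrightarrow> (\<exists>Hb::real. 0 \<le> Hb \<and> ereal Hb < Hend g \<and>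
     (\<exists>f::real \<Rightarrow> real.
        (AE x in lborel. Hb < x \<and> ereal x < Hend g \<longrightarrow> hazard g x = f x) \<and>
        (bounded (f ` {x. Hb < x \<and> ereal x < Hend g}) \<or> lsc_on {x. Hb < x \<and> ereal x < Hend g} f)))"

definition A1 :: "(real \<Rightarrow> real) \<Rightarrow> (real \<Rightarrow> real) \<Rightarrow> bool" where
  "A1 gs gr \<longleftrightarrow> is_density gs \<and> is_density gr
     \<and> (\<integral>\<^sup>+x\<in>{0..}. ennreal (ccdf_d gr x) \<partial>lborel) < \<infinity>
     \<and> (\<integral>\<^sup>+x\<in>{0..}. ennreal (ccdf_d gs x) \<partial>lborel) = 1
     \<and> (\<integral>\<^sup>+x\<in>{0..}. ennreal (x * gs x) \<partial>lborel) = 1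
     \<and> hazard_regular gs \<and> hazard_regular gr"

definition dom0 :: "ereal \<Rightarrow> real set" where
  "dom0 H = {x. 0 \<le> x \<and> ereal x < H}"

definition MF :: "ereal \<Rightarrow> real measure \<Rightarrow> bool" where
  "MF H \<mu> \<longleftrightarrow> sets \<mu> = sets borel \<and> finite_measure \<mu> \<and> emeasure \<mu> (- dom0 H) = 0"

definition mass :: "real measure \<Rightarrow> real" where
  "mass \<mu> = measure \<mu> UNIV"

definition pair_nn :: "(real \<Rightarrow> real) \<Rightarrow> real measure \<Rightarrow> ennreal" where
  "pair_nn f \<mu> = (\<integral>\<^sup>+x. ennreal (f x) \<partial>\<mu>)"

definition Fmu :: "real measure \<Rightarrow> real \<Rightarrow> real" where
  "Fmu \<mu> x = measure \<mu> {0..x}"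

definition Fmu_inv :: "real measure \<Rightarrow> real \<Rightarrow> real" where
  "Fmu_inv \<mu> y = Inf {x. 0 < x \<and> Fmu \<mu> x \<ge> y}"

definition wconv :: "ereal \<Rightarrow> ('b \<Rightarrow> real measure) \<Rightarrow> real measure \<Rightarrow> 'b filter \<Rightarrow> bool" where
  "wconv H \<mu> m F \<longleftrightarrow> (\<forall>f::real \<Rightarrow> real. continuous_on (dom0 H) f \<and> bounded (f ` dom0 H) \<longrightarrow>
      ((\<lambda>s. \<integral>x. indicator (dom0 H) x * f x \<partial>\<mu> s) \<longlongrightarrow> (\<integral>x. indicator (dom0 H) x * f x \<partial>m)) F)"

definition S0bar :: "ereal \<Rightarrow> ereal \<Rightarrow> real \<Rightarrow> real measure \<Rightarrow> real measure \<Rightarrow> bool" where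
  "S0bar Hs Hr x \<nu> \<eta> \<longleftrightarrow> 0 \<le> x \<and> MF Hs \<nu> \<and> MF Hr \<eta> \<and> 1 - mass \<nu> = max 0 (1 - x)"

text \<open>phi x s: C^1 (as restriction of a C^1 function on R^2), with compact support
 contained in [0,H) x [0,oo)\<close>
definition C1c :: "ereal \<Rightarrow> (real \<Rightarrow> real \<Rightarrow> real) \<Rightarrow> bool" where
  "C1c H \<phi> \<longleftrightarrow>
     (\<exists>px ps :: real \<Rightarrow> real \<Rightarrow> real.
        (\<forall>x s. ((\<lambda>(a,b). \<phi> a b) has_derivative (\<lambda>(da,db). px x s * da + ps x s * db)) (at (x,s)))
        \<and> continuous_on UNIV (\<lambda>(x,s). px x s) \<and> continuous_on UNIV (\<lambda>(x,s). ps x s))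
   \<and> (\<exists>K. compact K \<and> K \<subseteq> dom0 H \<times> {0..} \<and>
        (\<forall>x s. (x,s) \<in> dom0 H \<times> {0..} - K \<longrightarrow> \<phi> x s = 0))"

definition dxp :: "(real \<Rightarrow> real \<Rightarrow> real) \<Rightarrow> real \<Rightarrow> real \<Rightarrow> real" where
  "dxp \<phi> x s = deriv (\<lambda>y. \<phi> y s) x"

definition dsp :: "(real \<Rightarrow> real \<Rightarrow> real) \<Rightarrow> real \<Rightarrow> real \<Rightarrow> real" where
  "dsp \<phi> x s = deriv (\<lambda>r. \<phi> x r) s"

text \<open>Stieltjes integral int_0^t f(s) dK(s) for C^1 f, written via integration by parts\<close>
definition stieltjes :: "(real \<Rightarrow> real) \<Rightarrow> (real \<Rightarrow> real) \<Rightarrow> real \<Rightarrow> real" where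
  "stieltjes f K t = f t * K t - f 0 * K 0 - (\<integral>s\<in>{0..t}. deriv f s * K s \<partial>lborel)"

definition Dfl :: "(real \<Rightarrow> real) \<Rightarrow> (real \<Rightarrow> real measure) \<Rightarrow> real \<Rightarrow> real" where
  "Dfl gs \<nu> t = enn2real (\<integral>\<^sup>+s\<in>{0..t}. pair_nn (hazard gs) (\<nu> s) \<partial>lborel)"

definition Sfl :: "(real \<Rightarrow> real) \<Rightarrow> (real \<Rightarrow> real measure) \<Rightarrow> real \<Rightarrow> real" where
  "Sfl gr \<eta> t = enn2real (\<integral>\<^sup>+s\<in>{0..t}. pair_nn (hazard gr) (\<eta> s) \<partial>lborel)"

definition Kfl :: "(real \<Rightarrow> real) \<Rightarrow> (real \<Rightarrow> real measure) \<Rightarrow> real \<Rightarrow> real" where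
  "Kfl gs \<nu> t = mass (\<nu> t) - mass (\<nu> 0) + Dfl gs \<nu> t"

definition Qfl :: "(real \<Rightarrow> real) \<Rightarrow> (real \<Rightarrow> real measure) \<Rightarrow> real \<Rightarrow> real" where
  "Qfl X \<nu> t = X t - mass (\<nu> t)"

definition Rfl_nn :: "(real \<Rightarrow> real) \<Rightarrow> (real \<Rightarrow> real) \<Rightarrow> (real \<Rightarrow> real measure)
    \<Rightarrow> (real \<Rightarrow> real measure) \<Rightarrow> real \<Rightarrow> ennreal" where
  "Rfl_nn gr X \<nu> \<eta> t = (\<integral>\<^sup>+s\<in>{0..t}. (\<integral>\<^sup>+y\<in>{0..Qfl X \<nu> s}.
       ennreal (hazard gr (Fmu_inv (\<eta> s) y)) \<partial>lborel) \<partial>lborel)"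

definition cadlag_sol :: "ereal \<Rightarrow> ereal \<Rightarrow> (real \<Rightarrow> real) \<Rightarrow> (real \<Rightarrow> real measure)
    \<Rightarrow> (real \<Rightarrow> real measure) \<Rightarrow> bool" where
  "cadlag_sol Hs Hr X \<nu> \<eta> \<longleftrightarrow> (\<forall>t\<ge>0.
      MF Hs (\<nu> t) \<and> MF Hr (\<eta> t)
      \<and> (X \<longlongrightarrow> X t) (at_right t) \<and> wconv Hs \<nu> (\<nu> t) (at_right t) \<and> wconv Hr \<eta> (\<eta> t) (at_right t)
      \<and> (t > 0 \<longrightarrow> (\<exists>a. (X \<longlongrightarrow> a) (at_left t))
            \<and> (\<exists>m. MF Hs m \<and> wconv Hs \<nu> m (at_left t))
            \<and> (\<exists>m. MF Hr m \<and> wconv Hr \<eta> m (at_left t))))"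

definition fluid_solution :: "(real \<Rightarrow> real) \<Rightarrow> (real \<Rightarrow> real) \<Rightarrow> real
    \<Rightarrow> (real \<Rightarrow> real) \<Rightarrow> (real \<Rightarrow> real measure) \<Rightarrow> (real \<Rightarrow> real measure) \<Rightarrow> bool" where
  "fluid_solution gs gr lam X \<nu> \<eta> \<longleftrightarrow>
     S0bar (Hend gs) (Hend gr) (X 0) (\<nu> 0) (\<eta> 0)
   \<and> cadlag_sol (Hend gs) (Hend gr) X \<nu> \<eta>
   \<and> (\<forall>t\<ge>0.
        (\<integral>\<^sup>+s\<in>{0..t}. pair_nn (hazard gr) (\<eta> s) \<partial>lborel) < \<infinity>
      \<and> (\<integral>\<^sup>+s\<in>{0..t}. pair_nn (hazard gs) (\<nu> s) \<partial>lborel) < \<infinity>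
      \<and> (\<forall>\<phi>. C1c (Hend gs) \<phi> \<longrightarrow>
           (\<integral>x. \<phi> x t \<partial>\<nu> t) = (\<integral>x. \<phi> x 0 \<partial>\<nu> 0)
             + (\<integral>s\<in>{0..t}. (\<integral>x. dsp \<phi> x s + dxp \<phi> x s \<partial>\<nu> s) \<partial>lborel)
             - (\<integral>s\<in>{0..t}. (\<integral>x. hazard gs x * \<phi> x s \<partial>\<nu> s) \<partial>lborel)
             + stieltjes (\<lambda>s. \<phi> 0 s) (Kfl gs \<nu>) t)
      \<and> (\<forall>\<phi>. C1c (Hend gr) \<phi> \<longrightarrow>
           (\<integral>x. \<phi> x t \<partial>\<eta> t) = (\<integral>x. \<phi> x 0 \<partial>\<eta> 0)
             + (\<integral>s\<in>{0..t}. (\<integral>x. dsp \<phi> x s + dxp \<phi> x s \<partial>\<eta> s) \<partial>lborel)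
             - (\<integral>s\<in>{0..t}. (\<integral>x. hazard gr x * \<phi> x s \<partial>\<eta> s) \<partial>lborel)
             + lam * (\<integral>s\<in>{0..t}. \<phi> 0 s \<partial>lborel))
      \<and> 1 - mass (\<nu> t) = max 0 (1 - X t)
      \<and> Rfl_nn gr X \<nu> \<eta> t < \<infinity>
      \<and> X t = X 0 + lam * t - Dfl gs \<nu> t - enn2real (Rfl_nn gr X \<nu> \<eta> t)
      \<and> Qfl X \<nu> t \<le> mass (\<eta> t))"

definition ess_inf_haz :: "(real \<Rightarrow> real) \<Rightarrow> ereal" where
  "ess_inf_haz gs = - esssup (restrict_space lborel {0..}) (\<lambda>x. - ereal (hazard gs x))"

definition ess_sup_haz :: "(real \<Rightarrow> real) \<Rightarrow> ereal" where
  "ess_sup_haz gs = esssup (restrict_space lborel {0..}) (\<lambda>x. ereal (hazard gs x))"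

definition hs_theta :: "(real \<Rightarrow> real) \<Rightarrow> real measure \<Rightarrow> real \<Rightarrow> real" where
  "hs_theta gs \<nu>0 t = (\<integral>x. ccdf_d gs (x + t) / ccdf_d gs x * hazard gs (x + t) \<partial>\<nu>0)"

end

theory Submission imports Defs begin

lemma exp_int: assumes "(0::real) < a" shows "integrable lborel (\<lambda>t::real. indicator {0..} t * exp (-a*t))"
proof -
  have "set_integrable lebesgue {0..} (\<lambda>t::real. exp (-a*t))"
    using assms by (intro nonnegative_absolutely_integrable_1 integrable_on_exp_minus_to_infinity) auto
  then have "integrable lebesgue (\<lambda>t::real. indicator {0..} t * exp (-a*t))"
    by (simp add: set_integrable_def)
  then show ?thesis by (subst (asm) integrable_completion) auto
qed

lemma dens_int: assumes "is_density g" shows "integrable lborel (\<lambda>z. indicator {0..} z * g z)"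
proof -
  have m: "g \<in> borel_measurable borel" "\<And>x. 0 \<le> g x" and n: "(\<integral>\<^sup>+x\<in>{0..}. ennreal (g x) \<partial>lborel) = 1"
    using assms unfolding is_density_def by auto
  show ?thesis
  proof (rule integrableI_nonneg)
    show "(\<lambda>z. indicator {0..} z * g z) \<in> borel_measurable lborel" using m by measurable
    show "AE x in lborel. 0 \<le> indicator {0..} x * g x" using m by (auto simp: indicator_def)
    have "(\<integral>\<^sup>+x. ennreal (indicator {0..} x * g x) \<partial>lborel) = (\<integral>\<^sup>+x\<in>{0..}. ennreal (g x) \<partial>lborel)"
      by (intro nn_integral_cong) (auto simp: indicator_def)
    then show "(\<integral>\<^sup>+x. ennreal (indicator {0..} x * g x) \<partial>lborel) < \<infinity>" using n by simp
  qed
qed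

lemma dens_int2: assumes "is_density g" "A \<in> sets borel" shows "integrable lborel (\<lambda>z. indicator A z * (indicator {0..} z * g z))"
  using integrable_mult_indicator[OF _ dens_int[OF assms(1)], of A] assms by simp

lemma cdf_eq: assumes "is_density g" "0 \<le> x" "x \<le> y"
  shows "cdf_d g y - cdf_d g x = (\<integral>z. indicator {x<..y} z * g z \<partial>lborel)"
proof -
  have e: "\<And>u. cdf_d g u = (\<integral>z. indicator {..u} z * (indicator {0..} z * g z) \<partial>lborel)"
    unfolding cdf_d_def set_lebesgue_integral_def
    by (intro Bochner_Integration.integral_cong) (auto simp: indicator_def)
  have "cdf_d g y - cdf_d g x = (\<integral>z. indicator {..y} z * (indicator {0..} z * g z) - indicator {..x} z * (indicator {0..} z * g z) \<partial>lborel)"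
    unfolding e by (rule Bochner_Integration.integral_diff[symmetric]) (auto intro!: dens_int2 assms)
  also have "\<dots> = (\<integral>z. indicator {x<..y} z * g z \<partial>lborel)"
    using assms(2,3) by (intro Bochner_Integration.integral_cong) (auto simp: indicator_def)
  finally show ?thesis .
qed

lemma cdf_mono: assumes "is_density g" shows "mono (cdf_d g)"
proof
  fix x y :: real assume xy: "x \<le> y"
  have m: "\<And>x. 0 \<le> g x" using assms unfolding is_density_def by auto
  have e: "\<And>u. cdf_d g u = (\<integral>z. indicator {..u} z * (indicator {0..} z * g z) \<partial>lborel)"
    unfolding cdf_d_def set_lebesgue_integral_def
    by (intro Bochner_Integration.integral_cong) (auto simp: indicator_def)
  show "cdf_d g x \<le> cdf_d g y" unfolding e
    using xy m by (intro integral_mono dens_int2 assms) (auto simp: indicator_def)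
qed

lemma int_const: "x \<le> y \<Longrightarrow> (\<integral>z. indicator {x<..y} z * (C::real) \<partial>lborel) = C * (y - x)"
  by simp

locale hz =
  fixes g :: "real \<Rightarrow> real" and e :: real
  assumes dens: "is_density g" and epos: "0 < e" and hz: "\<And>z. 0 \<le> z \<Longrightarrow> e \<le> hazard g z"
begin

lemma gnn: "0 \<le> g z" using dens unfolding is_density_def by auto

lemma Gpos: "0 \<le> z \<Longrightarrow> 0 < ccdf_d g z"
proof -
  assume z: "0 \<le> z"
  have "0 < g z / ccdf_d g z" using hz[OF z] epos unfolding hazard_def by linarith
  then show ?thesis using gnn[of z] by (simp add: zero_less_divide_iff)
qed

lemma gbound: "0 \<le> z \<Longrightarrow> e * ccdf_d g z \<le> g z"
  using hz[of z] Gpos[of z] unfolding hazard_def by (simp add: le_divide_eq)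

lemma Ganti: "x \<le> y \<Longrightarrow> ccdf_d g y \<le> ccdf_d g x"
  using cdf_mono[OF dens] unfolding ccdf_d_def mono_def by auto

lemma step: assumes "0 \<le> x" "x \<le> y" shows "ccdf_d g y * (1 + e * (y - x)) \<le> ccdf_d g x"
proof -
  have "e * ccdf_d g y * (y - x) = (\<integral>z. indicator {x<..y} z * (e * ccdf_d g y) \<partial>lborel)"
    using assms by simp
  also have "\<dots> \<le> (\<integral>z. indicator {x<..y} z * g z \<partial>lborel)"
  proof (rule integral_mono)
    show "integrable lborel (\<lambda>z. indicator {x<..y} z * (e * ccdf_d g y))" using assms by (simp add: integrable_indicator_iff)
    have "integrable lborel (\<lambda>z. indicator {x<..y} z * (indicator {0..} z * g z))"
      by (rule dens_int2[OF dens]) simp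
    then show "integrable lborel (\<lambda>z. indicator {x<..y} z * g z)"
      by (rule Bochner_Integration.integrable_cong[THEN iffD1, rotated -1]) (use assms in \<open>auto simp: indicator_def\<close>)
    fix z
    show "indicator {x<..y} z * (e * ccdf_d g y) \<le> indicator {x<..y} z * g z"
    proof (cases "z \<in> {x<..y}")
      case True
      then have "e * ccdf_d g y \<le> e * ccdf_d g z" using Ganti[of z y] epos by auto
      also have "\<dots> \<le> g z" using gbound[of z] True assms by auto
      finally show ?thesis using True by simp
    qed simp
  qed
  also have "\<dots> = ccdf_d g x - ccdf_d g y" using cdf_eq[OF dens assms] unfolding ccdf_d_def by simp
  finally show ?thesis by (simp add: algebra_simps)
qed

lemma decay_nat: assumes "0 \<le> x" shows "ccdf_d g (x + real k) * (1 + e) ^ k \<le> ccdf_d g x"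
proof (induction k)
  case 0 then show ?case by simp
next
  case (Suc k)
  have "ccdf_d g (x + real (Suc k)) * (1 + e) \<le> ccdf_d g (x + real k)"
    using step[of "x + real k" "x + real (Suc k)"] assms by simp
  then have "ccdf_d g (x + real (Suc k)) * (1 + e) * (1+e)^k \<le> ccdf_d g (x + real k) * (1+e)^k"
    using epos by (intro mult_right_mono) auto
  then show ?case using Suc by (simp add: algebra_simps)
qed

lemma decay: assumes "0 \<le> x" "0 \<le> t"
  shows "ccdf_d g (x + t) \<le> ccdf_d g x * ((1 + e) * exp (- ln (1 + e) * t))"
proof -
  define k where "k = nat \<lfloor>t\<rfloor>"
  have kt: "real k \<le> t" "t - 1 \<le> real k" using assms unfolding k_def by linarith+
  have "ccdf_d g (x + t) \<le> ccdf_d g (x + real k)" using Ganti kt by auto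
  also have "\<dots> \<le> ccdf_d g x / (1 + e) ^ k"
    using decay_nat[OF assms(1), of k] epos by (simp add: le_divide_eq)
  also have "\<dots> \<le> ccdf_d g x * ((1 + e) * exp (- ln (1 + e) * t))"
  proof -
    have l: "0 < ln (1 + e)" using epos by simp
    have "(1 + e) ^ k = exp (real k * ln (1 + e))" using epos by (simp add: exp_of_nat_mult)
    also have "\<dots> \<ge> exp ((t - 1) * ln (1 + e))" using kt l by (intro exp_mono mult_right_mono) auto
    finally have "exp ((t - 1) * ln (1 + e)) \<le> (1 + e) ^ k" .
    moreover have "exp ((t - 1) * ln (1 + e)) = exp (ln (1 + e) * t) / (1 + e)"
      using epos by (simp add: algebra_simps exp_diff)
    ultimately have "1 / (1 + e) ^ k \<le> (1 + e) * exp (- ln (1 + e) * t)"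
      using epos by (simp add: divide_simps exp_minus mult.commute) 
    then show ?thesis using Gpos[OF assms(1)]
      by (metis divide_inverse less_eq_real_def mult_left_mono inverse_eq_divide)
  qed
  finally show ?thesis .
qed

end


lemma ylny: assumes "0 \<le> (y::real)" shows "\<bar>y * ln y\<bar> \<le> 2 * sqrt y + y^2"
proof (cases "y = 0")
  case False
  then have yp: "0 < y" using assms by simp
  show ?thesis
  proof (cases "y \<le> 1")
    case True
    have sp: "0 < sqrt y" using yp by simp
    have "ln (1 / sqrt y) \<le> 1 / sqrt y - 1" using sp by (intro ln_le_minus_one) simp
    moreover have "ln y = - 2 * ln (1 / sqrt y)" using yp
      by (simp add: ln_div ln_sqrt)
    ultimately have "- ln y \<le> 2 / sqrt y" by simp
    moreover have "ln y \<le> 0" using True yp by simp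
    ultimately have "\<bar>y * ln y\<bar> = y * (- ln y)" using yp by (simp add: abs_mult)
    also have "\<dots> \<le> y * (2 / sqrt y)" using yp \<open>- ln y \<le> 2 / sqrt y\<close> by (intro mult_left_mono) auto
    also have "y * (2 / sqrt y) = 2 * sqrt y" using yp
      by (metis real_div_sqrt less_eq_real_def times_divide_eq_right mult.commute)
    finally show ?thesis by (smt (verit) zero_le_power2)
  next
    case False
    have "ln y \<le> y - 1" using yp by (rule ln_le_minus_one)
    then have h1: "y * ln y \<le> y * y" using yp by (intro mult_left_mono) auto
    have "0 \<le> ln y" using False by simp
    then have h2: "0 \<le> y * ln y" using yp by simp
    have h3: "0 \<le> sqrt y" using yp by simp
    show ?thesis using h1 h3 abs_of_nonneg[OF h2] unfolding power2_eq_square by linarith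
  qed
qed simp

theorem mainTheorem6:
  fixes gs gr :: "real \<Rightarrow> real" and lam :: real and X :: "real \<Rightarrow> real"
    and \<nu> \<eta> :: "real \<Rightarrow> real measure"
  assumes A1: "A1 gs gr"
    and H1_pos: "0 < ess_inf_haz gs" and H1_fin: "ess_sup_haz gs < \<infinity>"
    and H1_version: "\<forall>x\<ge>0. ess_inf_haz gs \<le> ereal (hazard gs x) \<and> ereal (hazard gs x) \<le> ess_sup_haz gs"
    and lam: "lam > 1"
    and sol: "fluid_solution gs gr lam X \<nu> \<eta>"
  shows "(\<forall>t\<ge>0. ereal (hs_theta gs (\<nu> 0) t) \<le> ess_sup_haz gs)
    \<and> set_integrable lborel {0..} (\<lambda>t. hs_theta gs (\<nu> 0) t)
    \<and> set_integrable lborel {0..} (\<lambda>t. hs_theta gs (\<nu> 0) t * ln (hs_theta gs (\<nu> 0) t))"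
proof -
  define \<epsilon> where "\<epsilon> = real_of_ereal (ess_inf_haz gs)"
  define c where "c = real_of_ereal (ess_sup_haz gs)"
  have h0: "ess_inf_haz gs \<le> ereal (hazard gs 0)" "ereal (hazard gs 0) \<le> ess_sup_haz gs"
    using H1_version by auto
  have ei: "ess_inf_haz gs = ereal \<epsilon>" unfolding \<epsilon>_def using h0 H1_pos
    by (cases "ess_inf_haz gs") auto
  have es: "ess_sup_haz gs = ereal c" unfolding c_def using h0 H1_fin
    by (cases "ess_sup_haz gs") auto
  have epos: "0 < \<epsilon>" using H1_pos ei by simp
  have hb: "\<And>z. 0 \<le> z \<Longrightarrow> \<epsilon> \<le> hazard gs z \<and> hazard gs z \<le> c"
    using H1_version ei es by auto
  have cpos: "0 < c" using hb[of 0] epos by linarith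
  have dens: "is_density gs" using A1 unfolding A1_def by auto
  interpret hz gs \<epsilon> using dens epos hb by unfold_locales auto
  define \<nu>0 where "\<nu>0 = \<nu> 0"
  have S0: "S0bar (Hend gs) (Hend gr) (X 0) \<nu>0 (\<eta> 0)" using sol unfolding fluid_solution_def \<nu>0_def by (rule conjunct1)
  then have MF: "MF (Hend gs) \<nu>0" and mass: "mass \<nu>0 \<le> 1" unfolding S0bar_def by auto
  have sets\<nu>: "sets \<nu>0 = sets borel" and fin: "finite_measure \<nu>0" and null: "emeasure \<nu>0 (- dom0 (Hend gs)) = 0"
    using MF unfolding MF_def by auto
  interpret fm: finite_measure \<nu>0 by (rule fin)
  have sp: "space \<nu>0 = UNIV" using sets_eq_imp_space_eq[OF sets\<nu>] by simp
  have AEpos: "AE x in \<nu>0. 0 \<le> x"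
  proof (rule AE_I')
    show "- dom0 (Hend gs) \<in> null_sets \<nu>0" using null sets\<nu>
      by (auto simp: null_sets_def dom0_def intro!: measurable_sets)
  qed (auto simp: dom0_def)
  have mes: "measure \<nu>0 UNIV \<le> 1" using mass unfolding mass_def .
  define a where "a = ln (1 + \<epsilon>)"
  have apos: "0 < a" unfolding a_def using epos by simp
  define K where "K = c * (1 + \<epsilon>)"
  have Kpos: "0 < K" unfolding K_def using cpos epos by simp
  define f where "f = (\<lambda>t x. ccdf_d gs (x + t) / ccdf_d gs x * hazard gs (x + t))"
  have fb: "0 \<le> f t x \<and> f t x \<le> c \<and> f t x \<le> K * exp (- a * t)" if "0 \<le> x" "0 \<le> t" for t x
  proof -
    have G: "0 < ccdf_d gs x" "0 < ccdf_d gs (x + t)" using Gpos that by auto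
    have r1: "ccdf_d gs (x + t) / ccdf_d gs x \<le> 1" using G Ganti[of x "x+t"] that by simp
    have r2: "ccdf_d gs (x + t) / ccdf_d gs x \<le> (1 + \<epsilon>) * exp (- a * t)"
      using decay[OF that] G unfolding a_def by (simp add: divide_le_eq mult.commute)
    have h: "0 \<le> hazard gs (x + t)" "hazard gs (x + t) \<le> c" using hb[of "x+t"] epos that by auto
    have "f t x \<le> 1 * c" unfolding f_def using r1 h G by (intro mult_mono) auto
    moreover have "f t x \<le> ((1 + \<epsilon>) * exp (- a * t)) * c" unfolding f_def using r2 h G epos
      by (intro mult_mono) (auto intro: mult_nonneg_nonneg)
    moreover have "0 \<le> f t x" unfolding f_def using G h by simp
    ultimately show ?thesis unfolding K_def by (simp add: algebra_simps)
  qed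
  have cdfm[measurable]: "cdf_d gs \<in> borel_measurable borel" by (rule borel_measurable_mono[OF cdf_mono[OF dens]])
  have gsm[measurable]: "gs \<in> borel_measurable borel" using dens unfolding is_density_def by auto
  have fmb: "(\<lambda>(t, x). f t x) \<in> borel_measurable (lborel \<Otimes>\<^sub>M \<nu>0)"
  proof -
    have "(\<lambda>(t, x). f t x) \<in> borel_measurable (borel \<Otimes>\<^sub>M borel)"
      unfolding f_def hazard_def ccdf_d_def by measurable
    then show ?thesis by (subst measurable_cong_sets[OF sets_pair_measure_cong[OF sets_lborel sets\<nu>] refl])
  qed
  have hsd: "hs_theta gs \<nu>0 = (\<lambda>t. \<integral>x. f t x \<partial>\<nu>0)" unfolding hs_theta_def f_def by simp
  have hsm[measurable]: "hs_theta gs \<nu>0 \<in> borel_measurable lborel"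
    unfolding hsd by (rule fm.borel_measurable_lebesgue_integral[OF fmb])
  have hsb: "0 \<le> hs_theta gs \<nu>0 t \<and> hs_theta gs \<nu>0 t \<le> c \<and> hs_theta gs \<nu>0 t \<le> K * exp (- a * t)" if t: "0 \<le> t" for t
  proof -
    have fm1: "(\<lambda>x. f t x) \<in> borel_measurable \<nu>0"
      using measurable_Pair2[OF fmb, of t] by simp
    have AEf: "AE x in \<nu>0. 0 \<le> f t x \<and> f t x \<le> c \<and> f t x \<le> K * exp (- a * t)"
      using AEpos by eventually_elim (use fb t in auto)
    have int: "integrable \<nu>0 (\<lambda>x. f t x)"
      by (rule fm.integrable_const_bound[of _ c]) (use AEf fm1 in auto)
    have "0 \<le> (\<integral>x. f t x \<partial>\<nu>0)" using AEf by (intro integral_nonneg_AE) auto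
    moreover have "(\<integral>x. f t x \<partial>\<nu>0) \<le> (\<integral>x. c \<partial>\<nu>0)" using AEf int by (intro integral_mono_AE) auto
    moreover have "(\<integral>x. f t x \<partial>\<nu>0) \<le> (\<integral>x. K * exp (- a * t) \<partial>\<nu>0)" using AEf int by (intro integral_mono_AE) auto
    moreover have "measure \<nu>0 (space \<nu>0) * c \<le> c" using mes sp cpos
      by (metis less_eq_real_def mult_left_le_one_le measure_nonneg mult.commute)
    moreover have "measure \<nu>0 (space \<nu>0) * (K * exp (- a * t)) \<le> K * exp (- a * t)" using mes sp Kpos
      by (metis less_eq_real_def mult_left_le_one_le measure_nonneg mult.commute exp_gt_zero mult_pos_pos)
    ultimately show ?thesis unfolding hsd by simp
  qed
  have claim1: "\<forall>t\<ge>0. ereal (hs_theta gs (\<nu> 0) t) \<le> ess_sup_haz gs"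
    using hsb es unfolding \<nu>0_def by auto
  have claim2: "set_integrable lborel {0..} (\<lambda>t. hs_theta gs \<nu>0 t)"
    unfolding set_integrable_def
  proof (rule Bochner_Integration.integrable_bound)
    show "integrable lborel (\<lambda>t. K * (indicator {0..} t * exp (- a * t)))"
      by (intro integrable_mult_right exp_int apos)
    show "(\<lambda>t. indicat_real {0..} t *\<^sub>R hs_theta gs \<nu>0 t) \<in> borel_measurable lborel" by measurable
    show "AE t in lborel. norm (indicat_real {0..} t *\<^sub>R hs_theta gs \<nu>0 t) \<le> norm (K * (indicator {0..} t * exp (- a * t)))"
      using hsb Kpos by (auto simp: indicator_def)
  qed
  have claim3: "set_integrable lborel {0..} (\<lambda>t. hs_theta gs \<nu>0 t * ln (hs_theta gs \<nu>0 t))"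
    unfolding set_integrable_def
  proof (rule Bochner_Integration.integrable_bound)
    show "integrable lborel (\<lambda>t. 2 * sqrt K * (indicator {0..} t * exp (- (a/2) * t)) + K^2 * (indicator {0..} t * exp (- (2*a) * t)))"
      using apos by (intro Bochner_Integration.integrable_add integrable_mult_right exp_int) auto
    show "(\<lambda>t. indicat_real {0..} t *\<^sub>R (hs_theta gs \<nu>0 t * ln (hs_theta gs \<nu>0 t))) \<in> borel_measurable lborel" by measurable
    show "AE t in lborel. norm (indicat_real {0..} t *\<^sub>R (hs_theta gs \<nu>0 t * ln (hs_theta gs \<nu>0 t))) \<le>
         norm (2 * sqrt K * (indicator {0..} t * exp (- (a/2) * t)) + K^2 * (indicator {0..} t * exp (- (2*a) * t)))"
    proof (rule AE_I2)
      fix t :: real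
      show "norm (indicat_real {0..} t *\<^sub>R (hs_theta gs \<nu>0 t * ln (hs_theta gs \<nu>0 t))) \<le>
         norm (2 * sqrt K * (indicator {0..} t * exp (- (a/2) * t)) + K^2 * (indicator {0..} t * exp (- (2*a) * t)))"
      proof (cases "0 \<le> t")
        case True
        define y where "y = hs_theta gs \<nu>0 t"
        have y: "0 \<le> y" "y \<le> K * exp (- a * t)" using hsb[OF True] unfolding y_def by auto
        have "\<bar>y * ln y\<bar> \<le> 2 * sqrt y + y^2" by (rule ylny[OF y(1)])
        also have "\<dots> \<le> 2 * sqrt (K * exp (- a * t)) + (K * exp (- a * t))^2"
          using y by (intro add_mono mult_left_mono real_sqrt_le_mono power_mono) auto
        also have "sqrt (K * exp (- a * t)) = sqrt K * exp (- (a/2) * t)"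
        proof -
          have e2: "exp (- a * t) = (exp (- (a/2) * t))^2"
            unfolding power2_eq_square exp_add[symmetric] by (intro arg_cong[where f=exp]) (simp add: algebra_simps)
          show ?thesis by (subst e2) (simp add: real_sqrt_mult)
        qed
        also have "(K * exp (- a * t))^2 = K^2 * exp (- (2*a) * t)"
        proof -
          have e2: "exp (- (2*a) * t) = (exp (- a * t))^2"
            unfolding power2_eq_square exp_add[symmetric] by (intro arg_cong[where f=exp]) (simp add: algebra_simps)
          show ?thesis by (subst e2) (simp add: power_mult_distrib)
        qed
        finally show ?thesis using True Kpos unfolding y_def by (simp add: indicator_def)
      qed (simp add: indicator_def)
    qed
  qed
  show ?thesis using claim1 claim2 claim3 unfolding \<nu>0_def by blast
qed

end
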